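(* Let $\rho$ be a positive integer and $v$ an integer with $v \ge \frac{1}{2}(27\rho^2 - 3\rho + 60)$. Then every $(v,4)$-packing in which the maximum partial parallel class has size $\rho$ has at most \[ \frac{\rho v}{3} - \frac{\rho(\rho+1)}{6} \] blocks.
   Context: For integers $v \ge k \ge 2$, a $(v,k)$-packing is a pair $(X,\mathcal{B})$ where $X$ is a set of $v$ points and $\mathcal{B}$ is a set of $k$-subsets of $X$ (blocks) such that every pair of distinct points lies in at most one block. A partial parallel class (PPC) is a set of pairwise disjoint blocks; its size is the number of blocks. "The maximum PPC has size $\rho$" means the packing has a PPC of size $\rho$ but none of size $\rho+1$. *)

theory Defs
  imports Complex_Main
begin

definition packing :: "nat \<Rightarrow> nat \<Rightarrow> 'a set \<Rightarrow> 'a set set \<Rightarrow> bool" where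
  "packing v k X \<B> \<longleftrightarrow> finite X \<and> card X = v \<and> 2 \<le> k \<and> k \<le> v \<and>
     (\<forall>B\<in>\<B>. B \<subseteq> X \<and> card B = k) \<and>
     (\<forall>x\<in>X. \<forall>y\<in>X. x \<noteq> y \<longrightarrow> card {B\<in>\<B>. x \<in> B \<and> y \<in> B} \<le> 1)"

definition ppc :: "'a set set \<Rightarrow> 'a set set \<Rightarrow> bool" where
  "ppc \<B> P \<longleftrightarrow> P \<subseteq> \<B> \<and> (\<forall>B\<in>P. \<forall>C\<in>P. B \<noteq> C \<longrightarrow> B \<inter> C = {})"

definition max_ppc_size :: "'a set set \<Rightarrow> nat \<Rightarrow> bool" where
  "max_ppc_size \<B> \<rho> \<longleftrightarrow> (\<exists>P. ppc \<B> P \<and> finite P \<and> card P = \<rho>) \<and>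
     \<not> (\<exists>P. ppc \<B> P \<and> finite P \<and> card P = \<rho> + 1)"

end

theory Submission imports Defs begin


lemma star_or_small:
  assumes finH: "finite H"
    and c4: "\<forall>B\<in>H. finite B \<and> card B = 4"
    and inter: "\<forall>B\<in>H. \<forall>C\<in>H. B \<inter> C \<noteq> {}"
    and linH: "\<forall>B\<in>H. \<forall>C\<in>H. \<forall>x y. x \<in> B \<longrightarrow> x \<in> C \<longrightarrow> y \<in> B \<longrightarrow> y \<in> C \<longrightarrow> x \<noteq> y \<longrightarrow> B = C"
  shows "(\<exists>c. \<forall>B\<in>H. c \<in> B) \<or> card H \<le> 13"
proof (cases "\<exists>c. \<forall>B\<in>H. c \<in> B")
  case True then show ?thesis by blast
next
  case False
  note ns = False
  have deg: "card {D\<in>H. p \<in> D} \<le> 4" for p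
  proof -
    obtain C where C: "C \<in> H" "p \<notin> C" using ns by blast
    define f where "f D = (SOME q. q \<in> C \<inter> D)" for D
    have fD: "f D \<in> C \<inter> D" if "D \<in> H" for D
    proof -
      have "\<exists>q. q \<in> C \<inter> D" using inter C that by blast
      then show ?thesis unfolding f_def by (rule someI_ex)
    qed
    have inj: "inj_on f {D\<in>H. p \<in> D}"
    proof (rule inj_onI)
      fix D D' assume D: "D \<in> {D\<in>H. p \<in> D}" and D': "D' \<in> {D\<in>H. p \<in> D}" and eq: "f D = f D'"
      have "f D \<in> D" "f D \<in> D'" "f D \<noteq> p" using fD[of D] fD[of D'] D D' eq C by auto
      then show "D = D'" using linH D D' by blast
    qed
    have "f ` {D\<in>H. p \<in> D} \<subseteq> C" using fD by auto
    then have "card {D\<in>H. p \<in> D} \<le> card C"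
      using card_inj_on_le[OF inj] c4 C by blast
    then show ?thesis using c4 C by auto
  qed
  have "card H \<le> 13"
  proof (cases "H = {}")
    case True then show ?thesis by simp
  next
    case False
    then obtain B0 where B0: "B0 \<in> H" by blast
    have fB0: "finite B0" "card B0 = 4" using c4 B0 by auto
    have sub: "H \<subseteq> insert B0 (\<Union>p\<in>B0. {D\<in>H. p \<in> D} - {B0})" using inter B0 by blast
    have each: "card ({D\<in>H. p \<in> D} - {B0}) \<le> 3" if "p \<in> B0" for p
    proof -
      have "B0 \<in> {D\<in>H. p \<in> D}" using B0 that by auto
      moreover have "finite {D\<in>H. p \<in> D}" using finH by auto
      ultimately have "card ({D\<in>H. p \<in> D} - {B0}) = card {D\<in>H. p \<in> D} - 1"
        by (simp add: card_Diff_singleton)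
      then show ?thesis using deg[of p] by linarith
    qed
    have "card H \<le> card (insert B0 (\<Union>p\<in>B0. {D\<in>H. p \<in> D} - {B0}))"
      by (rule card_mono) (use finH fB0 sub in auto)
    also have "\<dots> \<le> Suc (card (\<Union>p\<in>B0. {D\<in>H. p \<in> D} - {B0}))"
    proof -
      have "finite (\<Union>p\<in>B0. {D\<in>H. p \<in> D} - {B0})" by (rule finite_subset[OF _ finH]) auto
      moreover have "\<And>A. finite A \<Longrightarrow> card (insert B0 A) \<le> Suc (card A)" by (simp add: card_insert_if)
      ultimately show ?thesis by blast
    qed
    finally have h1: "card H \<le> Suc (card (\<Union>p\<in>B0. {D\<in>H. p \<in> D} - {B0}))" .
    have "card (\<Union>p\<in>B0. {D\<in>H. p \<in> D} - {B0}) \<le> (\<Sum>p\<in>B0. card ({D\<in>H. p \<in> D} - {B0}))"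
      by (rule card_UN_le) (rule fB0)
    also have "\<dots> \<le> (\<Sum>p\<in>B0. 3)" by (rule sum_mono) (rule each)
    also have "\<dots> = 12" using fB0 by simp
    finally show ?thesis using h1 by simp
  qed
  then show ?thesis by blast
qed

locale pack4 =
  fixes X :: "'a set" and Bs :: "'a set set" and v :: nat
  assumes pk: "packing v 4 X Bs"
begin

lemma finX: "finite X" and cardX: "card X = v"
  using pk by (auto simp: packing_def)

lemma blk: "B \<in> Bs \<Longrightarrow> B \<subseteq> X \<and> card B = 4"
  using pk by (auto simp: packing_def)

lemma blk_fin: "B \<in> Bs \<Longrightarrow> finite B"
  using blk finX finite_subset by blast

lemma finBs: "finite Bs"
proof -
  have "Bs \<subseteq> Pow X" using blk by auto
  then show ?thesis using finX finite_subset by blast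
qed

lemma lin:
  assumes "B \<in> Bs" "C \<in> Bs" "x \<in> B" "x \<in> C" "y \<in> B" "y \<in> C" "x \<noteq> y"
  shows "B = C"
proof -
  have xy: "x \<in> X" "y \<in> X" using assms blk by auto
  have c: "card {B\<in>Bs. x \<in> B \<and> y \<in> B} \<le> Suc 0"
    using pk xy assms(7) unfolding packing_def by auto
  have "finite {B\<in>Bs. x \<in> B \<and> y \<in> B}" using finBs by auto
  with c have "\<forall>a\<in>{B\<in>Bs. x \<in> B \<and> y \<in> B}. \<forall>b\<in>{B\<in>Bs. x \<in> B \<and> y \<in> B}. a = b"
    using card_le_Suc0_iff_eq by blast
  then show ?thesis using assms by auto
qed

lemma lin_int:
  assumes "B \<in> Bs" "C \<in> Bs" "B \<noteq> C"
  shows "card (B \<inter> C) \<le> 1"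
proof -
  have "finite (B \<inter> C)" using blk_fin assms by auto
  moreover have "\<forall>a\<in>B \<inter> C. \<forall>b\<in>B \<inter> C. a = b" using lin assms by blast
  ultimately show ?thesis using card_le_Suc0_iff_eq by fastforce
qed


lemma local_bound:
  assumes SX: "S \<subseteq> X" and xS: "x \<in> S"
  shows "(\<Sum>B\<in>{B\<in>Bs. x \<in> B}. (7 - int (card (B \<inter> S)))) \<le> 2 * int v - 1 - int (card S)"
proof -
  define R where "R = {B\<in>Bs. x \<in> B}"
  define Ux where "Ux = \<Union> ((\<lambda>B. B - {x}) ` R)"
  have finR: "finite R" using finBs R_def by auto
  have finS: "finite S" using SX finX finite_subset by blast
  have disj: "\<forall>B\<in>R. \<forall>C\<in>R. B \<noteq> C \<longrightarrow> (B - {x}) \<inter> (C - {x}) = {}"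
    using lin unfolding R_def by blast
  have disj2: "\<forall>B\<in>R. \<forall>C\<in>R. B \<noteq> C \<longrightarrow> ((B - {x}) \<inter> S) \<inter> ((C - {x}) \<inter> S) = {}"
    using disj by blast
  have c1: "card Ux = (\<Sum>B\<in>R. card (B - {x}))"
    unfolding Ux_def using card_UN_disjoint[OF finR _ disj] blk_fin R_def by auto
  have c1': "(\<Sum>B\<in>R. card (B - {x})) = (\<Sum>B\<in>R. 3)"
    by (rule sum.cong) (auto simp: R_def blk blk_fin)
  have eqI: "Ux \<inter> S = \<Union> ((\<lambda>B. (B - {x}) \<inter> S) ` R)" unfolding Ux_def by auto
  have c2: "card (Ux \<inter> S) = (\<Sum>B\<in>R. card ((B - {x}) \<inter> S))"
    unfolding eqI using card_UN_disjoint[OF finR _ disj2] blk_fin R_def by auto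
  have c2': "\<And>B. B \<in> R \<Longrightarrow> int (card ((B - {x}) \<inter> S)) = int (card (B \<inter> S)) - 1"
  proof -
    fix B assume "B \<in> R"
    then have xBS: "x \<in> B \<inter> S" and fB: "finite (B \<inter> S)" using xS R_def blk_fin by auto
    have e: "(B - {x}) \<inter> S = (B \<inter> S) - {x}" by auto
    have "card (B \<inter> S) \<noteq> 0" using xBS fB by auto
    then have "card (B \<inter> S) \<ge> 1" by linarith
    moreover have "card ((B \<inter> S) - {x}) = card (B \<inter> S) - 1" using xBS fB by (simp add: card_Diff_singleton)
    ultimately show "int (card ((B - {x}) \<inter> S)) = int (card (B \<inter> S)) - 1"
      unfolding e by (simp add: of_nat_diff)
  qed
  have finUx: "finite Ux" unfolding Ux_def using finR blk_fin R_def by auto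
  have sub: "Ux \<union> (S - {x}) \<subseteq> X - {x}" unfolding Ux_def R_def using blk SX by auto
  have "card (Ux \<union> (S - {x})) \<le> card (X - {x})"
    by (rule card_mono) (use finX sub in auto)
  also have "\<dots> = v - 1" using xS SX finX cardX by (auto simp: card_Diff_singleton)
  finally have cu: "card (Ux \<union> (S - {x})) \<le> v - 1" .
  have cUI: "card Ux + card (S - {x}) = card (Ux \<union> (S - {x})) + card (Ux \<inter> (S - {x}))"
    by (rule card_Un_Int) (use finUx finS in auto)
  have e2: "Ux \<inter> (S - {x}) = Ux \<inter> S" unfolding Ux_def by auto
  have cS: "card (S - {x}) = card S - 1" using xS finS by auto
  have cm: "card (Ux \<inter> S) \<le> card (S - {x})"
    by (rule card_mono) (use finS e2 in auto)
  have "card S \<noteq> 0" using xS finS by auto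
  then have S1: "card S \<ge> 1" by linarith
  have "card X \<noteq> 0" using xS SX finX by auto
  then have v1: "v \<ge> 1" using cardX by linarith
  have i1: "int (card (Ux \<union> (S - {x}))) \<le> int v - 1" using cu v1 by linarith
  have i2: "int (card (S - {x})) = int (card S) - 1" using cS S1 by linarith
  have i3: "int (card Ux) = 3 * int (card R)" using c1 c1' by simp
  have cUI': "int (card Ux) + int (card (S - {x})) = int (card (Ux \<union> (S - {x}))) + int (card (Ux \<inter> S))"
    using cUI e2 by (metis of_nat_add)
  have key1: "3 * int (card R) + (int (card S) - 1) - int (card (Ux \<inter> S)) \<le> int v - 1"
    using cUI' i1 i2 i3 by linarith
  have key2: "int (card (Ux \<inter> S)) \<le> int (card S) - 1"
    using cm i2 by linarith
  note key = key1 key2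
  have "(\<Sum>B\<in>R. (7 - int (card (B \<inter> S)))) = (\<Sum>B\<in>R. (6 - (int (card ((B - {x}) \<inter> S)))))"
    by (rule sum.cong) (auto simp: c2')
  also have "\<dots> = 6 * int (card R) - int (card (Ux \<inter> S))"
    by (simp add: c2 sum_subtractf of_nat_sum)
  finally show ?thesis using key unfolding R_def by linarith
qed

lemma lemmaA:
  assumes SX: "S \<subseteq> X"
  shows "6 * int (card {B\<in>Bs. B \<inter> S \<noteq> {}}) \<le> int (card S) * (2 * int v - 1 - int (card S))"
proof -
  have finS: "finite S" using SX finX finite_subset by blast
  define g where "g B = 7 - int (card (B \<inter> S))" for B
  have "(\<Sum>x\<in>S. (\<Sum>B\<in>{B\<in>Bs. x \<in> B}. g B)) \<le> (\<Sum>x\<in>S. 2 * int v - 1 - int (card S))"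
    by (rule sum_mono) (use local_bound[OF SX] g_def in auto)
  also have "\<dots> = int (card S) * (2 * int v - 1 - int (card S))" by simp
  finally have A: "(\<Sum>x\<in>S. (\<Sum>B\<in>{B\<in>Bs. x \<in> B}. g B)) \<le> int (card S) * (2 * int v - 1 - int (card S))" .
  have "(\<Sum>x\<in>S. (\<Sum>B\<in>{B\<in>Bs. x \<in> B}. g B)) = (\<Sum>x\<in>S. (\<Sum>B\<in>Bs. if x \<in> B then g B else 0))"
    by (rule sum.cong) (auto simp: sum.inter_filter finBs)
  also have "\<dots> = (\<Sum>B\<in>Bs. (\<Sum>x\<in>S. if x \<in> B then g B else 0))" by (rule sum.swap)
  also have "\<dots> = (\<Sum>B\<in>Bs. int (card (B \<inter> S)) * g B)"
  proof (rule sum.cong)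
    fix B assume "B \<in> Bs"
    have "(\<Sum>x\<in>S. if x \<in> B then g B else 0) = (\<Sum>x\<in>{x\<in>S. x \<in> B}. g B)"
      by (subst sum.inter_filter[OF finS]) simp
    also have "{x\<in>S. x \<in> B} = B \<inter> S" by auto
    finally show "(\<Sum>x\<in>S. if x \<in> B then g B else 0) = int (card (B \<inter> S)) * g B" by simp
  qed simp
  finally have B: "(\<Sum>x\<in>S. (\<Sum>B\<in>{B\<in>Bs. x \<in> B}. g B)) = (\<Sum>B\<in>Bs. int (card (B \<inter> S)) * g B)" .
  have "6 * int (card {B\<in>Bs. B \<inter> S \<noteq> {}}) = (\<Sum>B\<in>{B\<in>Bs. B \<inter> S \<noteq> {}}. 6)" by simp
  also have "\<dots> = (\<Sum>B\<in>Bs. if B \<inter> S \<noteq> {} then 6 else 0)" by (rule sum.inter_filter[OF finBs])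
  also have "\<dots> \<le> (\<Sum>B\<in>Bs. int (card (B \<inter> S)) * g B)"
  proof (rule sum_mono)
    fix B assume B: "B \<in> Bs"
    have "card (B \<inter> S) \<le> card B" by (rule card_mono) (use blk_fin B in auto)
    then have le4: "card (B \<inter> S) \<le> 4" using blk B by auto
    have fin: "finite (B \<inter> S)" using finS by auto
    show "(if B \<inter> S \<noteq> {} then 6 else 0) \<le> int (card (B \<inter> S)) * g B"
    proof (cases "B \<inter> S = {}")
      case True then show ?thesis by (simp add: g_def)
    next
      case False
      then have "card (B \<inter> S) \<noteq> 0" using fin by auto
      then have "card (B \<inter> S) \<ge> 1" by linarith
      then have "card (B \<inter> S) \<in> {1,2,3,4}" using le4 by auto
      then show ?thesis using False unfolding g_def by (elim insertE) auto
    qed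
  qed
  finally show ?thesis using A B by linarith
qed

end


lemma ppc_insert:
  assumes Q: "ppc Bs Q" and B: "B \<in> Bs" and d: "\<And>i. i \<in> Q \<Longrightarrow> B \<inter> i = {}"
  shows "ppc Bs (insert B Q)"
  unfolding ppc_def
proof (intro conjI ballI impI)
  show "insert B Q \<subseteq> Bs" using Q B unfolding ppc_def by auto
  fix X1 X2 assume X: "X1 \<in> insert B Q" "X2 \<in> insert B Q" "X1 \<noteq> X2"
  show "X1 \<inter> X2 = {}"
  proof (cases "X1 = B")
    case True
    then have "X2 \<in> Q" using X by auto
    then show ?thesis using d True by auto
  next
    case False
    then have X1: "X1 \<in> Q" using X by auto
    show ?thesis
    proof (cases "X2 = B")
      case True
      then show ?thesis using d[OF X1] by blast
    next
      case False
      then have "X2 \<in> Q" using X by auto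
      then show ?thesis using Q X1 X(3) unfolding ppc_def by blast
    qed
  qed
qed

lemma ppc_subset: "ppc Bs Q \<Longrightarrow> Q' \<subseteq> Q \<Longrightarrow> ppc Bs Q'"
  unfolding ppc_def by blast

lemma ppc_union:
  assumes Q1: "ppc Bs Q1" and Q2: "ppc Bs Q2" and d: "\<And>a b. a \<in> Q1 \<Longrightarrow> b \<in> Q2 \<Longrightarrow> a \<noteq> b \<Longrightarrow> a \<inter> b = {}"
  shows "ppc Bs (Q1 \<union> Q2)"
  unfolding ppc_def
proof (intro conjI ballI impI)
  show "Q1 \<union> Q2 \<subseteq> Bs" using Q1 Q2 unfolding ppc_def by blast
  fix X1 X2 assume X: "X1 \<in> Q1 \<union> Q2" "X2 \<in> Q1 \<union> Q2" "X1 \<noteq> X2"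
  show "X1 \<inter> X2 = {}"
  proof (cases "X1 \<in> Q1")
    case True
    show ?thesis
    proof (cases "X2 \<in> Q1")
      case True2: True
      then show ?thesis using Q1 True X(3) unfolding ppc_def by blast
    next
      case False
      then have "X2 \<in> Q2" using X by blast
      then show ?thesis using d[OF True _ X(3)] by blast
    qed
  next
    case False
    then have X1: "X1 \<in> Q2" using X by blast
    show ?thesis
    proof (cases "X2 \<in> Q1")
      case True
      have "X1 \<noteq> X2" using X(3) .
      then have "X2 \<inter> X1 = {}" using d[OF True X1] by blast
      then show ?thesis by blast
    next
      case False
      then have "X2 \<in> Q2" using X by blast
      then show ?thesis using Q2 X1 X(3) unfolding ppc_def by blast
    qed
  qed
qed

lemma two_choose: "2 * (n choose 2) = n * (n - 1)"
proof (induct n)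
  case 0 then show ?case by simp
next
  case (Suc n)
  have "(Suc n) choose 2 = (n choose 1) + (n choose 2)" by (simp add: numeral_2_eq_2)
  then have "2 * ((Suc n) choose 2) = 2 * n + n * (n - 1)" using Suc by simp
  also have "\<dots> = Suc n * (Suc n - 1)" by (cases n) (auto simp: algebra_simps)
  finally show ?case .
qed

lemma two_choose_int: "2 * int (n choose 2) = int n * (int n - 1)"
proof -
  have "2 * (n choose 2) = n * (n - 1)" by (rule two_choose)
  then have "int (2 * (n choose 2)) = int (n * (n - 1))" by simp
  then show ?thesis by (cases n) (auto simp: algebra_simps)
qed

lemma quad_pos: assumes "(r::int) \<ge> 1" shows "27 * r^2 - 77 * r + 54 \<ge> 0"
proof -
  consider "r = 1" | "r = 2" | "r \<ge> 3" using assms by linarith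
  then show ?thesis
  proof cases
    case 3
    then have "r * (27 * r - 77) \<ge> 0" by (intro mult_nonneg_nonneg) auto
    then show ?thesis by (simp add: power2_eq_square algebra_simps)
  qed auto
qed

locale main = pack4 +
  fixes P :: "'a set set" and \<rho> :: nat
  assumes ppcP: "ppc Bs P" and finP: "finite P" and cardP: "card P = \<rho>"
    and nomore: "\<not> (\<exists>Q. ppc Bs Q \<and> finite Q \<and> card Q = \<rho> + 1)"
begin

definition "Uu = \<Union>P"
definition "Hf j = {B\<in>Bs. B \<inter> Uu \<subseteq> j}"
definition "large j \<longleftrightarrow> (\<exists>c\<in>j. \<forall>B\<in>Hf j. c \<in> B) \<and> 14 \<le> card (Hf j)"
definition "Cen j = (SOME c. c \<in> j \<and> (\<forall>B\<in>Hf j. c \<in> B))"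
definition "Lg = {j\<in>P. large j}"
definition "Sm = {j\<in>P. \<not> large j}"
definition "Sc = Cen ` Lg"
definition "Ww = \<Union>Sm"

lemma PBs: "P \<subseteq> Bs" using ppcP by (simp add: ppc_def)
lemma Pdisj: "i \<in> P \<Longrightarrow> j \<in> P \<Longrightarrow> i \<noteq> j \<Longrightarrow> i \<inter> j = {}" using ppcP by (simp add: ppc_def)
lemma Pblk: "j \<in> P \<Longrightarrow> j \<subseteq> X \<and> card j = 4 \<and> finite j" using PBs blk blk_fin by blast
lemma Bne: "B \<in> Bs \<Longrightarrow> B \<noteq> {}" using blk by fastforce

lemma no_big:
  assumes "ppc Bs Q" "finite Q" "\<rho> + 1 \<le> card Q" shows False
proof -
  obtain T where T: "T \<subseteq> Q" "card T = \<rho> + 1" "finite T"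
    using obtain_subset_with_card_n[OF assms(3)] by blast
  have "ppc Bs T" using assms(1) T(1) unfolding ppc_def by blast
  then show False using nomore T by blast
qed

lemma meetsU: "B \<in> Bs \<Longrightarrow> B \<inter> Uu \<noteq> {}"
proof
  assume B: "B \<in> Bs" and e: "B \<inter> Uu = {}"
  have BP: "B \<notin> P" using e Bne[OF B] Uu_def by blast
  have "ppc Bs (insert B P)" using ppcP B e unfolding ppc_def Uu_def by blast
  moreover have "card (insert B P) = \<rho> + 1" using BP finP cardP by simp
  ultimately show False using no_big[of "insert B P"] finP by simp
qed

lemma HBs: "Hf j \<subseteq> Bs" unfolding Hf_def by auto
lemma finH: "finite (Hf j)" using HBs finBs finite_subset by blast
lemma jH: "j \<in> P \<Longrightarrow> j \<in> Hf j" unfolding Hf_def using PBs by auto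

lemma H_not_P: assumes "j \<in> P" "B \<in> Hf j" "B \<in> P" shows "B = j"
proof (rule ccontr)
  assume ne: "B \<noteq> j"
  have "B \<subseteq> Uu" using assms(3) Uu_def by auto
  then have "B \<subseteq> j" using assms(2) Hf_def by auto
  then have "B = {}" using Pdisj[OF assms(3) assms(1) ne] by auto
  then show False using Bne assms(3) PBs by auto
qed

lemma H_inter: assumes j: "j \<in> P" and B: "B \<in> Hf j" and C: "C \<in> Hf j" shows "B \<inter> C \<noteq> {}"
proof
  assume e: "B \<inter> C = {}"
  have BB: "B \<in> Bs" "C \<in> Bs" using B C HBs by auto
  have BC: "B \<noteq> C" using e Bne BB by auto
  have nB: "B \<notin> P - {j}" using H_not_P[OF j B] by auto
  have nC: "C \<notin> P - {j}" using H_not_P[OF j C] by auto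
  have dB: "B \<inter> i = {}" if "i \<in> P - {j}" for i
  proof -
    have "B \<inter> i \<subseteq> B \<inter> Uu" using that Uu_def by auto
    also have "\<dots> \<subseteq> j" using B Hf_def by auto
    finally show ?thesis using Pdisj[of i j] that j by auto
  qed
  have dC: "C \<inter> i = {}" if "i \<in> P - {j}" for i
  proof -
    have "C \<inter> i \<subseteq> C \<inter> Uu" using that Uu_def by auto
    also have "\<dots> \<subseteq> j" using C Hf_def by auto
    finally show ?thesis using Pdisj[of i j] that j by auto
  qed
  have "ppc Bs (P - {j})" using ppc_subset[OF ppcP] by blast
  then have "ppc Bs (insert C (P - {j}))" using ppc_insert BB dC by blast
  then have "ppc Bs (insert B (insert C (P - {j})))"
    using ppc_insert[of Bs "insert C (P - {j})" B] BB dB e by blast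
  moreover have "card (insert B (insert C (P - {j}))) = \<rho> + 1"
  proof -
    have "card (P - {j}) = \<rho> - 1" using j finP cardP by simp
    moreover have "\<rho> \<ge> 1" using j finP cardP by (cases "\<rho> = 0") auto
    ultimately show ?thesis using nB nC BC finP by simp
  qed
  ultimately show False using no_big[of "insert B (insert C (P - {j}))"] finP by simp
qed

lemma small_card: assumes j: "j \<in> P" and nl: "\<not> large j" shows "card (Hf j) \<le> 13"
proof -
  have "(\<exists>c. \<forall>B\<in>Hf j. c \<in> B) \<or> card (Hf j) \<le> 13"
  proof (rule star_or_small[OF finH])
    show "\<forall>B\<in>Hf j. finite B \<and> card B = 4" using HBs blk blk_fin by blast
    show "\<forall>B\<in>Hf j. \<forall>C\<in>Hf j. B \<inter> C \<noteq> {}" using H_inter j by blast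
    show "\<forall>B\<in>Hf j. \<forall>C\<in>Hf j. \<forall>x y. x \<in> B \<longrightarrow> x \<in> C \<longrightarrow> y \<in> B \<longrightarrow> y \<in> C \<longrightarrow> x \<noteq> y \<longrightarrow> B = C"
      using HBs lin by blast
  qed
  then show ?thesis
  proof
    assume "\<exists>c. \<forall>B\<in>Hf j. c \<in> B"
    then obtain c where c: "\<forall>B\<in>Hf j. c \<in> B" by blast
    then have "c \<in> j" using jH[OF j] by blast
    then show ?thesis using c nl unfolding large_def by auto
  qed
qed

lemma cen: assumes "large j" shows "Cen j \<in> j" "\<forall>B\<in>Hf j. Cen j \<in> B"
proof -
  have "\<exists>c. c \<in> j \<and> (\<forall>B\<in>Hf j. c \<in> B)" using assms large_def by auto
  then have "Cen j \<in> j \<and> (\<forall>B\<in>Hf j. Cen j \<in> B)" unfolding Cen_def by (rule someI_ex)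
  then show "Cen j \<in> j" "\<forall>B\<in>Hf j. Cen j \<in> B" by auto
qed

lemma cardH_large: "large j \<Longrightarrow> 14 \<le> card (Hf j)" using large_def by auto

lemma E_U: assumes j: "j \<in> P" "large j" and E: "E \<in> Hf j" "E \<noteq> j" shows "E \<inter> Uu = {Cen j}"
proof -
  have c1: "Cen j \<in> E" using cen(2)[OF j(2)] E(1) by blast
  have c2: "Cen j \<in> j" using cen(1)[OF j(2)] .
  have EB: "E \<in> Bs" using E(1) HBs by blast
  have jB: "j \<in> Bs" using j(1) PBs by blast
  have EU: "E \<inter> Uu \<subseteq> j" using E(1) unfolding Hf_def by blast
  have cU: "Cen j \<in> Uu" using c2 j(1) unfolding Uu_def by blast
  have "p = Cen j" if pE: "p \<in> E" and pU: "p \<in> Uu" for p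
  proof (rule ccontr)
    assume ne: "p \<noteq> Cen j"
    have "p \<in> j" using pE pU EU by blast
    then have "E = j" using lin[OF EB jB pE _ c1 c2 ne] by blast
    then show False using E(2) by blast
  qed
  then show ?thesis using c1 cU by blast
qed

lemma out_unique: assumes j: "j \<in> P" "large j" and D: "D \<in> Hf j" "D' \<in> Hf j"
  and p: "p \<in> D" "p \<in> D'" "p \<notin> Uu" shows "D = D'"
proof -
  have c: "Cen j \<in> D" "Cen j \<in> D'" using cen(2)[OF j(2)] D by blast+
  have c2: "Cen j \<in> j" using cen(1)[OF j(2)] .
  have "Cen j \<in> Uu" using c2 j(1) unfolding Uu_def by blast
  then have ne: "p \<noteq> Cen j" using p(3) by blast
  have DB: "D \<in> Bs" "D' \<in> Bs" using D HBs by blast+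
  show ?thesis using lin[OF DB p(1) p(2) c ne] .
qed

lemma Sc_mem: assumes xS: "x \<in> Sc" and xj: "x \<in> j" and j: "j \<in> P" shows "large j \<and> x = Cen j"
proof -
  obtain i where i: "i \<in> Lg" "x = Cen i" using xS unfolding Sc_def by blast
  have iP: "i \<in> P" and li: "large i" using i(1) unfolding Lg_def by blast+
  have "Cen i \<in> i" using cen(1)[OF li] .
  then have "x \<in> i" using i(2) by simp
  then have "i = j" using Pdisj[OF iP j] xj by blast
  then show ?thesis using li i(2) by simp
qed

lemma Sc_large: assumes j: "j \<in> P" and l: "large j" shows "Sc \<inter> j = {Cen j}"
proof -
  have "j \<in> Lg" using j l unfolding Lg_def by blast
  then have "Cen j \<in> Sc" unfolding Sc_def by blast
  moreover have "Cen j \<in> j" using cen(1)[OF l] .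
  moreover have "x = Cen j" if "x \<in> Sc" "x \<in> j" for x using Sc_mem[OF that j] by blast
  ultimately show ?thesis by blast
qed

lemma Sc_small: assumes j: "j \<in> P" and l: "\<not> large j" shows "Sc \<inter> j = {}"
  using Sc_mem[OF _ _ j] l by blast

lemma ScU: "Sc \<subseteq> Uu"
proof
  fix x assume "x \<in> Sc"
  then obtain i where i: "i \<in> Lg" "x = Cen i" unfolding Sc_def by blast
  have iP: "i \<in> P" and li: "large i" using i(1) unfolding Lg_def by blast+
  have "Cen i \<in> i" using cen(1)[OF li] .
  then show "x \<in> Uu" using i(2) iP unfolding Uu_def by blast
qed


lemma exchange: assumes B: "B \<in> Bs" and BS: "B \<inter> Sc = {}" shows "\<exists>j\<in>Sm. B \<inter> j \<noteq> {}"
proof (rule ccontr)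
  assume nt: "\<not> (\<exists>j\<in>Sm. B \<inter> j \<noteq> {})"
  have allL: "large j" if "j \<in> P" "B \<inter> j \<noteq> {}" for j
    using nt that unfolding Sm_def by blast
  define J where "J = {j\<in>P. B \<inter> j \<noteq> {}}"
  have JP: "J \<subseteq> P" unfolding J_def by blast
  have finJ: "finite J" using finite_subset[OF JP finP] .
  have JL: "large j" "j \<in> P" if "j \<in> J" for j using allL that unfolding J_def by blast+
  have finB: "finite B" using blk_fin[OF B] .
  have cB: "card B = 4" using blk[OF B] by blast
  have BnP: "B \<notin> P"
  proof
    assume BP: "B \<in> P"
    have "B \<inter> B \<noteq> {}" using Bne[OF B] by blast
    then have lB: "large B" using allL[OF BP] by blast
    then have "B \<in> Lg" using BP unfolding Lg_def by blast
    then have "Cen B \<in> Sc" unfolding Sc_def by blast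
    moreover have "Cen B \<in> B" using cen(1)[OF lB] .
    ultimately show False using BS by blast
  qed
  have cJ: "card J \<le> 4"
  proof -
    define f where "f j = (SOME p. p \<in> B \<inter> j)" for j
    have fj: "f j \<in> B \<inter> j" if "j \<in> J" for j
    proof -
      have "\<exists>p. p \<in> B \<inter> j" using that unfolding J_def by blast
      then show ?thesis unfolding f_def by (rule someI_ex)
    qed
    have "inj_on f J"
    proof (rule inj_onI)
      fix i j assume i: "i \<in> J" and j: "j \<in> J" and e: "f i = f j"
      show "i = j"
      proof (rule ccontr)
        assume "i \<noteq> j"
        then have "i \<inter> j = {}" using Pdisj JP i j by blast
        then show False using fj[OF i] fj[OF j] e by auto
      qed
    qed
    moreover have "f ` J \<subseteq> B" using fj by blast
    ultimately have "card J \<le> card B" using card_inj_on_le finB by blast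
    then show ?thesis using cB by simp
  qed
  have cBU: "card (B - Uu) \<le> 3"
  proof -
    obtain q where q: "q \<in> B" "q \<in> Uu" using meetsU[OF B] by blast
    have "card (B - Uu) \<le> card (B - {q})" by (rule card_mono) (use finB q in auto)
    also have "\<dots> = 3" using q finB cB by simp
    finally show ?thesis .
  qed
  have EU3: "card (E - Uu) \<le> 3" if "k \<in> P" "large k" "E \<in> Hf k" "E \<noteq> k" for E k
  proof -
    have EB: "E \<in> Bs" using that(3) HBs by blast
    have "E \<inter> Uu = {Cen k}" using E_U that by blast
    then have q: "Cen k \<in> E" "Cen k \<in> Uu" by blast+
    have "card (E - Uu) \<le> card (E - {Cen k})" by (rule card_mono) (use blk_fin[OF EB] q in auto)
    also have "\<dots> = 3" using q blk_fin[OF EB] blk[OF EB] by simp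
    finally show ?thesis .
  qed
  have G: "finite J' \<Longrightarrow> J' \<subseteq> J \<Longrightarrow> \<exists>E. \<forall>k\<in>J'. E k \<in> Hf k \<and> E k \<noteq> k \<and> E k \<inter> B = {} \<and> (\<forall>l\<in>J'. l \<noteq> k \<longrightarrow> E k \<inter> E l = {})" for J'
  proof (induct J' rule: finite_induct)
    case empty
    then show ?case by blast
  next
    case (insert j J')
    have J'J: "J' \<subseteq> J" using insert.prems by simp
    have jJ: "j \<in> J" using insert.prems by simp
    obtain E where E: "\<forall>k\<in>J'. E k \<in> Hf k \<and> E k \<noteq> k \<and> E k \<inter> B = {} \<and> (\<forall>l\<in>J'. l \<noteq> k \<longrightarrow> E k \<inter> E l = {})"
      using insert.hyps(3)[OF J'J] by (elim exE)
    have E1: "E k \<in> Hf k" "E k \<noteq> k" "E k \<inter> B = {}" if "k \<in> J'" for k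
      using bspec[OF E that] by blast+
    have E2: "E k \<inter> E l = {}" if "k \<in> J'" "l \<in> J'" "l \<noteq> k" for k l
      using bspec[OF E that(1)] that(2,3) by blast
    have jP: "j \<in> P" and lj: "large j" using JL[OF jJ] by blast+
    have "card (insert j J') \<le> card J" by (rule card_mono[OF finJ insert.prems])
    then have cJ': "card J' \<le> 3" using cJ insert.hyps by simp
    define Z where "Z = (B - Uu) \<union> (\<Union>k\<in>J'. E k - Uu)"
    have finZ: "finite Z" unfolding Z_def
    proof (intro finite_UnI finite_UN_I)
      show "finite (B - Uu)" using finB by blast
      show "finite J'" using insert.hyps(1) .
      fix k assume "k \<in> J'"
      then have "E k \<in> Bs" using E1(1) HBs by blast
      then show "finite (E k - Uu)" using blk_fin by blast
    qed
    have ZU: "Z \<inter> Uu = {}" unfolding Z_def by blast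
    have z1: "card Z \<le> card (B - Uu) + card (\<Union>k\<in>J'. E k - Uu)" unfolding Z_def by (rule card_Un_le)
    have z2: "card (\<Union>k\<in>J'. E k - Uu) \<le> (\<Sum>k\<in>J'. card (E k - Uu))" by (rule card_UN_le[OF insert.hyps(1)])
    have z3: "(\<Sum>k\<in>J'. card (E k - Uu)) \<le> (\<Sum>k\<in>J'. 3)"
    proof (rule sum_mono)
      fix k assume k: "k \<in> J'"
      then have kJ: "k \<in> J" using J'J by blast
      show "card (E k - Uu) \<le> 3" using EU3[OF JL(2)[OF kJ] JL(1)[OF kJ] E1(1)[OF k] E1(2)[OF k]] .
    qed
    have z4: "(\<Sum>k\<in>J'. (3::nat)) = 3 * card J'" by simp
    have cZ: "card Z \<le> 12" using z1 z2 z3 z4 cBU cJ' by linarith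
    define M where "M = Hf j - {j}"
    have cM: "card M \<ge> 13"
    proof -
      have "j \<in> Hf j" using jH[OF jP] .
      then have "card M = card (Hf j) - 1" unfolding M_def using finH by simp
      then show ?thesis using cardH_large[OF lj] by simp
    qed
    define Bad where "Bad = {D\<in>M. D \<inter> Z \<noteq> {}}"
    have cBad: "card Bad \<le> 12"
    proof -
      define g where "g D = (SOME p. p \<in> D \<inter> Z)" for D
      have gD: "g D \<in> D \<inter> Z" if "D \<in> Bad" for D
      proof -
        have "\<exists>p. p \<in> D \<inter> Z" using that unfolding Bad_def by blast
        then show ?thesis unfolding g_def by (rule someI_ex)
      qed
      have "inj_on g Bad"
      proof (rule inj_onI)
        fix D D' assume D: "D \<in> Bad" and D': "D' \<in> Bad" and e: "g D = g D'"
        have DH1: "D \<in> Hf j" using D unfolding Bad_def M_def by blast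
        have DH2: "D' \<in> Hf j" using D' unfolding Bad_def M_def by blast
        have g1: "g D \<in> D" "g D \<in> Z" using gD[OF D] by blast+
        have g2: "g D \<in> D'" using gD[OF D'] unfolding e[symmetric] by blast
        have g3: "g D \<notin> Uu" using g1(2) ZU by blast
        show "D = D'" using out_unique[OF jP lj DH1 DH2 g1(1) g2 g3] .
      qed
      moreover have "g ` Bad \<subseteq> Z" using gD by blast
      ultimately have "card Bad \<le> card Z" using card_inj_on_le finZ by blast
      then show ?thesis using cZ by simp
    qed
    have "\<not> M \<subseteq> Bad"
    proof
      assume "M \<subseteq> Bad"
      moreover have "Bad \<subseteq> M" unfolding Bad_def by blast
      ultimately have "M = Bad" by (rule subset_antisym)
      then have "card M \<le> card Bad" by simp
      then show False using cM cBad by simp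
    qed
    then obtain D where DM: "D \<in> M" and DZ: "D \<inter> Z = {}" unfolding Bad_def by blast
    have DH: "D \<in> Hf j" and Dj: "D \<noteq> j" using DM unfolding M_def by blast+
    have DU: "D \<inter> Uu = {Cen j}" using E_U[OF jP lj DH Dj] .
    have jLg: "j \<in> Lg" using jP lj unfolding Lg_def by blast
    then have cS: "Cen j \<in> Sc" unfolding Sc_def by blast
    have DB: "D \<inter> B = {}"
    proof -
      have "p \<notin> B" if "p \<in> D" for p
      proof
        assume pB: "p \<in> B"
        show False
        proof (cases "p \<in> Uu")
          case True
          then have "p = Cen j" using DU that by blast
          then show False using cS pB BS by blast
        next
          case False
          then have "p \<in> Z" using pB unfolding Z_def by blast
          then show False using DZ that by blast
        qed
      qed
      then show ?thesis by blast
    qed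
    have DE: "D \<inter> E l = {}" if lJ': "l \<in> J'" for l
    proof -
      have lJ: "l \<in> J" using lJ' J'J by blast
      have lP: "l \<in> P" and ll: "large l" using JL[OF lJ] by blast+
      have ElU: "E l \<inter> Uu = {Cen l}" using E_U[OF lP ll E1(1)[OF lJ'] E1(2)[OF lJ']] .
      have jl: "j \<noteq> l" using lJ' insert.hyps(2) by blast
      have "p \<notin> E l" if pD: "p \<in> D" for p
      proof
        assume pE: "p \<in> E l"
        show False
        proof (cases "p \<in> Uu")
          case True
          then have e1: "p = Cen j" and e2: "p = Cen l" using DU ElU pD pE by blast+
          have "p \<in> j" using cen(1)[OF lj] e1 by simp
          moreover have "p \<in> l" using cen(1)[OF ll] e2 by simp
          ultimately show False using Pdisj[OF jP lP jl] by blast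
        next
          case False
          then have "p \<in> Z" using pE lJ' unfolding Z_def by blast
          then show False using DZ pD by blast
        qed
      qed
      then show ?thesis by blast
    qed
    define E' where "E' = E(j := D)"
    have "\<forall>k\<in>insert j J'. E' k \<in> Hf k \<and> E' k \<noteq> k \<and> E' k \<inter> B = {} \<and> (\<forall>l\<in>insert j J'. l \<noteq> k \<longrightarrow> E' k \<inter> E' l = {})"
    proof
      fix k assume k: "k \<in> insert j J'"
      show "E' k \<in> Hf k \<and> E' k \<noteq> k \<and> E' k \<inter> B = {} \<and> (\<forall>l\<in>insert j J'. l \<noteq> k \<longrightarrow> E' k \<inter> E' l = {})"
      proof (cases "k = j")
        case True
        have "\<forall>l\<in>insert j J'. l \<noteq> k \<longrightarrow> E' k \<inter> E' l = {}"
        proof (intro ballI impI)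
          fix l assume l: "l \<in> insert j J'" "l \<noteq> k"
          then have lJ': "l \<in> J'" using True by blast
          have "E' l = E l" using l True unfolding E'_def by simp
          then show "E' k \<inter> E' l = {}" using DE[OF lJ'] True unfolding E'_def by simp
        qed
        then show ?thesis using True DH Dj DB unfolding E'_def by simp
      next
        case False
        then have kJ': "k \<in> J'" using k by blast
        have Ek: "E' k = E k" using False unfolding E'_def by simp
        have "\<forall>l\<in>insert j J'. l \<noteq> k \<longrightarrow> E' k \<inter> E' l = {}"
        proof (intro ballI impI)
          fix l assume l: "l \<in> insert j J'" "l \<noteq> k"
          show "E' k \<inter> E' l = {}"
          proof (cases "l = j")
            case True
            then have "E' l = D" unfolding E'_def by simp
            then show ?thesis using DE[OF kJ'] Ek by blast
          next
            case False
            then have lJ': "l \<in> J'" and El: "E' l = E l" using l unfolding E'_def by auto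
            show ?thesis using E2[OF kJ' lJ' l(2)] El Ek by simp
          qed
        qed
        then show ?thesis using E1[OF kJ'] Ek by simp
      qed
    qed
    then show ?case by blast
  qed
  obtain E where E: "\<forall>k\<in>J. E k \<in> Hf k \<and> E k \<noteq> k \<and> E k \<inter> B = {} \<and> (\<forall>l\<in>J. l \<noteq> k \<longrightarrow> E k \<inter> E l = {})"
    using G[OF finJ] by blast
  have F1: "E k \<in> Hf k" "E k \<noteq> k" "E k \<inter> B = {}" if "k \<in> J" for k
    using bspec[OF E that] by blast+
  have F2: "E k \<inter> E l = {}" if "k \<in> J" "l \<in> J" "l \<noteq> k" for k l
    using bspec[OF E that(1)] that(2,3) by blast
  have EkU: "E k \<inter> Uu = {Cen k}" if "k \<in> J" for k
    using E_U[OF JL(2)[OF that] JL(1)[OF that] F1(1)[OF that] F1(2)[OF that]] .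
  have EnP: "E k \<notin> P" if "k \<in> J" for k
    using H_not_P[OF JL(2)[OF that] F1(1)[OF that]] F1(2)[OF that] by blast
  have EBs: "E k \<in> Bs" if "k \<in> J" for k using F1(1)[OF that] HBs by blast
  have injE: "inj_on E J"
  proof (rule inj_onI)
    fix k l assume k: "k \<in> J" and l: "l \<in> J" and e: "E k = E l"
    show "k = l"
    proof (rule ccontr)
      assume "k \<noteq> l"
      then have "E k \<inter> E l = {}" using F2[OF k l] by blast
      then show False using e EkU[OF k] by blast
    qed
  qed
  have ppc1: "ppc Bs (P - J)" using ppc_subset[OF ppcP] by blast
  have ppc2: "ppc Bs (E ` J)"
    unfolding ppc_def
  proof (intro conjI ballI impI)
    show "E ` J \<subseteq> Bs" using EBs by blast
    fix X1 X2 assume "X1 \<in> E ` J" "X2 \<in> E ` J" "X1 \<noteq> X2"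
    then obtain k l where kl: "k \<in> J" "l \<in> J" "X1 = E k" "X2 = E l" by (auto simp: image_iff)
    then have "k \<noteq> l" using \<open>X1 \<noteq> X2\<close> by auto
    then have "E l \<inter> E k = {}" using F2[OF kl(2) kl(1)] by simp
    then show "X1 \<inter> X2 = {}" using kl(3,4) by (simp add: Int_commute)
  qed
  have ppc3: "ppc Bs ((P - J) \<union> E ` J)"
  proof (rule ppc_union[OF ppc1 ppc2])
    fix a b assume a: "a \<in> P - J" and b: "b \<in> E ` J" and "a \<noteq> b"
    from b obtain k where k: "k \<in> J" and bk: "b = E k" by (auto simp: image_iff)
    have kP: "k \<in> P" using JP k by (rule subsetD)
    have aP: "a \<in> P" and aJ: "a \<notin> J" using a by simp_all
    have ak: "a \<noteq> k" using aJ k by auto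
    have ak0: "a \<inter> k = {}" by (rule Pdisj[OF aP kP ak])
    have aU: "a \<subseteq> Uu" unfolding Uu_def using aP by (rule Union_upper)
    have ck: "Cen k \<in> k" using cen(1)[OF JL(1)[OF k]] .
    have EU: "E k \<inter> Uu = {Cen k}" using EkU[OF k] .
    have "p \<notin> E k" if pa: "p \<in> a" for p
    proof
      assume "p \<in> E k"
      moreover have "p \<in> Uu" using aU pa by (rule subsetD)
      ultimately have "p = Cen k" using EU by auto
      then have "p \<in> k" using ck by simp
      then show False using ak0 pa by auto
    qed
    then show "a \<inter> b = {}" unfolding bk by auto
  qed
  have ppc4: "ppc Bs (insert B ((P - J) \<union> E ` J))"
  proof (rule ppc_insert[OF ppc3 B])
    fix i assume i: "i \<in> (P - J) \<union> E ` J"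
    show "B \<inter> i = {}"
    proof (cases "i \<in> P - J")
      case True
      then show ?thesis unfolding J_def by blast
    next
      case False
      then obtain k where "k \<in> J" "i = E k" using i by blast
      then show ?thesis using F1(3) by blast
    qed
  qed
  have BnE: "B \<notin> (P - J) \<union> E ` J"
  proof
    assume "B \<in> (P - J) \<union> E ` J"
    then obtain k where k: "k \<in> J" "B = E k" using BnP by blast
    then have "B \<inter> B = {}" using F1(3) by metis
    then show False using Bne[OF B] by blast
  qed
  have disjPE: "(P - J) \<inter> E ` J = {}" using EnP by blast
  have "card ((P - J) \<union> E ` J) = card (P - J) + card (E ` J)"
    by (rule card_Un_disjoint) (use finP finJ disjPE in auto)
  also have "card (E ` J) = card J" using card_image[OF injE] .
  also have "card (P - J) = \<rho> - card J" using card_Diff_subset[OF finJ JP] cardP by simp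
  finally have c1: "card ((P - J) \<union> E ` J) = \<rho> - card J + card J" .
  have "card J \<le> \<rho>" using card_mono[OF finP JP] cardP by simp
  then have c2: "card (insert B ((P - J) \<union> E ` J)) = \<rho> + 1"
    using c1 BnE finP finJ by simp
  have "finite (insert B ((P - J) \<union> E ` J))" using finP finJ by simp
  then show False using no_big[OF ppc4] c2 by simp
qed


lemma finLg: "finite Lg" and finSm: "finite Sm"
  using finP unfolding Lg_def Sm_def by auto

lemma LgP: "Lg \<subseteq> P" and SmP: "Sm \<subseteq> P" unfolding Lg_def Sm_def by auto

lemma card_LgSm: "card Lg + card Sm = \<rho>"
proof -
  have "Lg \<union> Sm = P" unfolding Lg_def Sm_def by auto
  moreover have "Lg \<inter> Sm = {}" unfolding Lg_def Sm_def by auto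
  ultimately show ?thesis using card_Un_disjoint[OF finLg finSm] cardP by simp
qed

lemma card_Sc: "card Sc = card Lg"
proof -
  have "inj_on Cen Lg"
  proof (rule inj_onI)
    fix i j assume i: "i \<in> Lg" and j: "j \<in> Lg" and e: "Cen i = Cen j"
    have iP: "i \<in> P" and li: "large i" using i unfolding Lg_def by auto
    have jP: "j \<in> P" and lj: "large j" using j unfolding Lg_def by auto
    have "Cen i \<in> i" using cen(1)[OF li] .
    moreover have "Cen i \<in> j" using cen(1)[OF lj] e by simp
    ultimately show "i = j" using Pdisj[OF iP jP] by blast
  qed
  then show ?thesis unfolding Sc_def by (rule card_image)
qed

lemma card_Union4: assumes "Q \<subseteq> P" shows "card (\<Union>Q) = 4 * card Q"
proof -
  have pw: "pairwise disjnt Q" unfolding pairwise_def disjnt_def using Pdisj assms by blast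
  have "card (\<Union>Q) = sum card Q" by (rule card_Union_disjoint[OF pw]) (use Pblk assms in blast)
  also have "\<dots> = sum (\<lambda>_. 4) Q" by (rule sum.cong) (use Pblk assms in auto)
  finally show ?thesis by simp
qed

lemma finU: "finite Uu" unfolding Uu_def using finP Pblk by blast

lemma card_U: "card Uu = 4 * \<rho>" unfolding Uu_def using card_Union4[of P] cardP by simp

lemma card_W: "card Ww = 4 * card Sm" unfolding Ww_def using card_Union4[OF SmP] .

lemma W_sub: "Ww \<subseteq> Uu - Sc"
proof
  fix x assume "x \<in> Ww"
  then obtain j where j: "j \<in> Sm" "x \<in> j" unfolding Ww_def by blast
  have jP: "j \<in> P" and nl: "\<not> large j" using j(1) unfolding Sm_def by auto
  have "x \<in> Uu" using jP j(2) unfolding Uu_def by blast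
  moreover have "x \<notin> Sc" using Sc_small[OF jP nl] j(2) by blast
  ultimately show "x \<in> Uu - Sc" by blast
qed

lemma card_USc: "card (Uu - Sc) = 4 * \<rho> - card Lg"
  using card_Diff_subset[OF finite_subset[OF ScU finU] ScU] card_U card_Sc by simp

lemma card_L: "card (Uu - Sc - Ww) = 3 * card Lg"
proof -
  have "card (Uu - Sc - Ww) = card (Uu - Sc) - card Ww"
    by (rule card_Diff_subset[OF finite_subset[OF W_sub] W_sub]) (use finU in blast)
  then show ?thesis using card_USc card_W card_LgSm by simp
qed



definition "Tp = {e. e \<subseteq> Uu - Sc \<and> card e = 2 \<and> e \<inter> Ww \<noteq> {} \<and> (\<forall>j\<in>P. \<not> e \<subseteq> j)}"

lemma card_Tp: "card Tp + (card (Uu - Sc - Ww) choose 2) + 6 * card Sm = card (Uu - Sc) choose 2"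
proof -
  define all2 where "all2 = {e. e \<subseteq> Uu - Sc \<and> card e = 2}"
  define A2 where "A2 = {e. e \<subseteq> Uu - Sc - Ww \<and> card e = 2}"
  define Bf where "Bf = (\<Union>j\<in>Sm. {e. e \<subseteq> j \<and> card e = 2})"
  have finUS: "finite (Uu - Sc)" using finU by blast
  have finL: "finite (Uu - Sc - Ww)" using finU by blast
  have c_all: "card all2 = card (Uu - Sc) choose 2" unfolding all2_def using n_subsets[OF finUS] .
  have c_A2: "card A2 = card (Uu - Sc - Ww) choose 2" unfolding A2_def using n_subsets[OF finL] .
  have c_Bf: "card Bf = 6 * card Sm"
  proof -
    have finj: "finite j" if "j \<in> Sm" for j using Pblk SmP that by blast
    have "card Bf = (\<Sum>j\<in>Sm. card {e. e \<subseteq> j \<and> card e = 2})" unfolding Bf_def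
    proof (rule card_UN_disjoint[OF finSm])
      show "\<forall>j\<in>Sm. finite {e. e \<subseteq> j \<and> card e = 2}"
      proof
        fix j assume "j \<in> Sm"
        then have "finite (Pow j)" using finj by blast
        then show "finite {e. e \<subseteq> j \<and> card e = 2}" by (rule finite_subset[rotated]) auto
      qed
      show "\<forall>i\<in>Sm. \<forall>j\<in>Sm. i \<noteq> j \<longrightarrow> {e. e \<subseteq> i \<and> card e = 2} \<inter> {e. e \<subseteq> j \<and> card e = 2} = {}"
      proof (intro ballI impI)
        fix i j assume i: "i \<in> Sm" and j: "j \<in> Sm" and ij: "i \<noteq> j"
        have "i \<inter> j = {}" using Pdisj ij i j SmP by blast
        moreover have "e \<noteq> {}" if "card e = 2" for e :: "'a set" using that by auto
        ultimately show "{e. e \<subseteq> i \<and> card e = 2} \<inter> {e. e \<subseteq> j \<and> card e = 2} = {}" by blast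
      qed
    qed
    also have "\<dots> = (\<Sum>j\<in>Sm. 6)"
    proof (rule sum.cong)
      fix j assume j: "j \<in> Sm"
      have "card {e. e \<subseteq> j \<and> card e = 2} = card j choose 2" using n_subsets[OF finj[OF j]] .
      also have "card j = 4" using Pblk SmP j by blast
      finally show "card {e. e \<subseteq> j \<and> card e = 2} = 6" by (simp add: numeral_eq_Suc)
    qed simp
    finally show ?thesis by simp
  qed
  have ne2: "e \<noteq> {}" if "card e = 2" for e :: "'a set" using that by auto
  have eq: "all2 = Tp \<union> A2 \<union> Bf"
  proof
    show "all2 \<subseteq> Tp \<union> A2 \<union> Bf"
    proof
      fix e assume e: "e \<in> all2"
      then have eU: "e \<subseteq> Uu - Sc" and e2: "card e = 2" unfolding all2_def by blast+
      show "e \<in> Tp \<union> A2 \<union> Bf"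
      proof (cases "e \<inter> Ww = {}")
        case True
        then have "e \<in> A2" using eU e2 unfolding A2_def by blast
        then show ?thesis by blast
      next
        case False
        show ?thesis
        proof (cases "\<forall>j\<in>P. \<not> e \<subseteq> j")
          case True
          then have "e \<in> Tp" using eU e2 False unfolding Tp_def by blast
          then show ?thesis by blast
        next
          case nt: False
          then obtain j where j: "j \<in> P" "e \<subseteq> j" by blast
          obtain p where p: "p \<in> e" "p \<in> Ww" using False by blast
          obtain j' where j': "j' \<in> Sm" "p \<in> j'" using p(2) unfolding Ww_def by blast
          have "j' \<in> P" using j'(1) SmP by blast
          then have "j = j'" using Pdisj[OF j(1)] j(2) p(1) j'(2) by blast
          then have "e \<in> Bf" using j'(1) j(2) e2 unfolding Bf_def by blast
          then show ?thesis by blast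
        qed
      qed
    qed
    show "Tp \<union> A2 \<union> Bf \<subseteq> all2"
    proof
      fix e assume "e \<in> Tp \<union> A2 \<union> Bf"
      then consider "e \<in> Tp" | "e \<in> A2" | "e \<in> Bf" by blast
      then show "e \<in> all2"
      proof cases
        case 1 then show ?thesis unfolding Tp_def all2_def by blast
      next
        case 2 then show ?thesis unfolding A2_def all2_def by blast
      next
        case 3
        then obtain j where j: "j \<in> Sm" "e \<subseteq> j" "card e = 2" unfolding Bf_def by blast
        have "j \<subseteq> Ww" using j(1) unfolding Ww_def by blast
        then have "e \<subseteq> Uu - Sc" using j(2) W_sub by blast
        then show ?thesis using j(3) unfolding all2_def by blast
      qed
    qed
  qed
  have d1: "Tp \<inter> A2 = {}" unfolding Tp_def A2_def by blast
  have d2: "(Tp \<union> A2) \<inter> Bf = {}"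
  proof -
    have "Tp \<inter> Bf = {}" unfolding Tp_def Bf_def using SmP by blast
    moreover have "A2 \<inter> Bf = {}"
    proof -
      have "e \<notin> Bf" if "e \<in> A2" for e
      proof
        assume "e \<in> Bf"
        then obtain j where j: "j \<in> Sm" "e \<subseteq> j" unfolding Bf_def by blast
        have "j \<subseteq> Ww" using j(1) unfolding Ww_def by blast
        then have "e \<subseteq> Ww" using j(2) by blast
        moreover have "e \<inter> Ww = {}" "card e = 2" using that unfolding A2_def by blast+
        ultimately show False using ne2 by blast
      qed
      then show ?thesis by blast
    qed
    ultimately show ?thesis by blast
  qed
  have finall: "finite all2"
  proof -
    have "all2 \<subseteq> Pow Uu" unfolding all2_def by blast
    then show ?thesis using finU by (simp add: finite_subset)
  qed
  have fT: "finite Tp" and fA: "finite A2" and fB: "finite Bf"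
    using finall eq by (auto intro: finite_subset)
  have "card all2 = card (Tp \<union> A2) + card Bf"
    unfolding eq by (rule card_Un_disjoint) (use fT fA fB d2 in auto)
  also have "card (Tp \<union> A2) = card Tp + card A2"
    by (rule card_Un_disjoint) (use fT fA d1 in auto)
  finally show ?thesis using c_all c_A2 c_Bf by simp
qed

lemma finTp: "finite Tp"
proof -
  have "Tp \<subseteq> Pow Uu" unfolding Tp_def by blast
  then show ?thesis using finU by (simp add: finite_subset)
qed

lemma N0_bound: "card {B\<in>Bs. B \<inter> Sc = {}} \<le> 13 * card Sm + card Tp"
proof -
  define N0 where "N0 = {B\<in>Bs. B \<inter> Sc = {}}"
  define N0H where "N0H = {B\<in>N0. \<exists>j\<in>Sm. B \<in> Hf j}"
  define N0R where "N0R = N0 - N0H"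
  have finN0: "finite N0" unfolding N0_def using finBs by simp
  have "N0H \<subseteq> (\<Union>j\<in>Sm. Hf j)" unfolding N0H_def by blast
  then have "card N0H \<le> card (\<Union>j\<in>Sm. Hf j)" by (rule card_mono[rotated]) (use finSm finH in blast)
  also have "\<dots> \<le> (\<Sum>j\<in>Sm. card (Hf j))" by (rule card_UN_le[OF finSm])
  also have "\<dots> \<le> (\<Sum>j\<in>Sm. 13)"
  proof (rule sum_mono)
    fix j assume "j \<in> Sm"
    then show "card (Hf j) \<le> 13" using small_card unfolding Sm_def by blast
  qed
  finally have cH: "card N0H \<le> 13 * card Sm" by simp
  have pick: "\<exists>e. e \<subseteq> B \<and> e \<in> Tp" if B: "B \<in> N0R" for B
  proof -
    have BB: "B \<in> Bs" and BS: "B \<inter> Sc = {}" and nH: "\<forall>j\<in>Sm. B \<notin> Hf j"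
      using B unfolding N0R_def N0H_def N0_def by blast+
    obtain j where j: "j \<in> Sm" "B \<inter> j \<noteq> {}" using exchange[OF BB BS] by blast
    have jP: "j \<in> P" using j(1) SmP by blast
    obtain y where y: "y \<in> B" "y \<in> j" using j(2) by blast
    have "\<not> (B \<inter> Uu \<subseteq> j)" using nH j(1) BB unfolding Hf_def by blast
    then obtain z where z: "z \<in> B" "z \<in> Uu" "z \<notin> j" by blast
    have yz: "y \<noteq> z" using y z by blast
    have yU: "y \<in> Uu" using jP y(2) unfolding Uu_def by blast
    have yW: "y \<in> Ww" using j(1) y(2) unfolding Ww_def by blast
    have "{y, z} \<subseteq> Uu - Sc" using yU z(2) y(1) z(1) BS by blast
    moreover have "card {y, z} = 2" using yz by simp
    moreover have "{y, z} \<inter> Ww \<noteq> {}" using yW by blast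
    moreover have "\<forall>i\<in>P. \<not> {y, z} \<subseteq> i"
    proof (intro ballI notI)
      fix i assume i: "i \<in> P" and sub: "{y, z} \<subseteq> i"
      then have "i = j" using Pdisj[OF i jP] y(2) by blast
      then show False using sub z(3) by blast
    qed
    ultimately have "{y, z} \<in> Tp" unfolding Tp_def by blast
    moreover have "{y, z} \<subseteq> B" using y(1) z(1) by blast
    ultimately show ?thesis by blast
  qed
  define f where "f B = (SOME e. e \<subseteq> B \<and> e \<in> Tp)" for B
  have fB: "f B \<subseteq> B \<and> f B \<in> Tp" if "B \<in> N0R" for B
    unfolding f_def using pick[OF that] by (rule someI_ex)
  have "inj_on f N0R"
  proof (rule inj_onI)
    fix B B' assume B: "B \<in> N0R" and B': "B' \<in> N0R" and e: "f B = f B'"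
    have "card (f B) = 2" using fB[OF B] unfolding Tp_def by blast
    then obtain x y where xy: "f B = {x, y}" "x \<noteq> y" by (auto simp: card_2_iff)
    have "x \<in> B" "y \<in> B" using fB[OF B] xy by blast+
    moreover have "x \<in> B'" "y \<in> B'" using fB[OF B'] xy e by blast+
    moreover have "B \<in> Bs" "B' \<in> Bs" using B B' unfolding N0R_def N0_def by blast+
    ultimately show "B = B'" using lin xy(2) by blast
  qed
  moreover have "f ` N0R \<subseteq> Tp" using fB by blast
  ultimately have cR: "card N0R \<le> card Tp" using card_inj_on_le finTp by blast
  have "N0 = N0H \<union> N0R" unfolding N0R_def N0H_def by blast
  then have "card N0 \<le> card N0H + card N0R" using card_Un_le by metis
  then show ?thesis using cH cR unfolding N0_def by linarith
qed


lemma final: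
  assumes hv: "2 * real v \<ge> 27 * real \<rho>^2 - 3 * real \<rho> + 60" and r1: "\<rho> \<ge> 1"
  shows "6 * int (card Bs) \<le> 2 * int \<rho> * int v - int \<rho>^2 - int \<rho>"
proof -
  define a where "a = int (card Lg)"
  define sm where "sm = int (card Sm)"
  define T where "T = int (card Tp)"
  define N1 where "N1 = int (card {B\<in>Bs. B \<inter> Sc \<noteq> {}})"
  define N0 where "N0 = int (card {B\<in>Bs. B \<inter> Sc = {}})"
  have rho: "int \<rho> = a + sm" using card_LgSm unfolding a_def sm_def by simp
  have cN: "int (card Bs) = N1 + N0"
  proof -
    have "Bs = {B\<in>Bs. B \<inter> Sc \<noteq> {}} \<union> {B\<in>Bs. B \<inter> Sc = {}}" by blast
    moreover have "card ({B\<in>Bs. B \<inter> Sc \<noteq> {}} \<union> {B\<in>Bs. B \<inter> Sc = {}}) = card {B\<in>Bs. B \<inter> Sc \<noteq> {}} + card {B\<in>Bs. B \<inter> Sc = {}}"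
      by (rule card_Un_disjoint) (use finBs in auto)
    ultimately show ?thesis unfolding N1_def N0_def by simp
  qed
  have ScX: "Sc \<subseteq> X" using ScU Pblk unfolding Uu_def by blast
  have h1: "6 * N1 \<le> a * (2 * int v - 1 - a)"
    using lemmaA[OF ScX] card_Sc unfolding N1_def a_def by simp
  have h2: "N0 \<le> 13 * sm + T" using N0_bound unfolding N0_def sm_def T_def by linarith
  have h3: "2 * T = (3 * a + 4 * sm) * (3 * a + 4 * sm - 1) - 3 * a * (3 * a - 1) - 12 * sm"
  proof -
    have e: "int (card Tp) + int (card (Uu - Sc - Ww) choose 2) + 6 * int (card Sm) = int (card (Uu - Sc) choose 2)"
      using card_Tp by (metis of_nat_add of_nat_mult of_nat_numeral)
    have l1: "int (card (Uu - Sc)) = 3 * a + 4 * sm"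
      using card_USc card_LgSm unfolding a_def sm_def by simp
    have l2: "int (card (Uu - Sc - Ww)) = 3 * a" using card_L unfolding a_def by simp
    have "2 * int (card (Uu - Sc) choose 2) = (3 * a + 4 * sm) * (3 * a + 4 * sm - 1)"
      using two_choose_int[of "card (Uu - Sc)"] l1 by simp
    moreover have "2 * int (card (Uu - Sc - Ww) choose 2) = 3 * a * (3 * a - 1)"
      using two_choose_int[of "card (Uu - Sc - Ww)"] l2 by simp
    ultimately show ?thesis using e unfolding T_def sm_def by linarith
  qed
  have hv': "2 * int v \<ge> 27 * int \<rho>^2 - 3 * int \<rho> + 60"
  proof -
    have "real_of_int (2 * int v) \<ge> real_of_int (27 * int \<rho>^2 - 3 * int \<rho> + 60)" using hv by simp
    then show ?thesis by (simp only: of_int_le_iff)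
  qed
  have h4: "sm * (2 * int v - 74 * a - 49 * sm - 31) \<ge> 0"
  proof (cases "sm = 0")
    case True then show ?thesis by simp
  next
    case False
    then have s1: "sm \<ge> 1" unfolding sm_def by simp
    have a0: "a \<ge> 0" unfolding a_def by simp
    have "27 * int \<rho>^2 - 77 * int \<rho> + 54 \<ge> 0" using quad_pos r1 by simp
    then have "2 * int v - 74 * a - 49 * sm - 31 \<ge> 0" using hv' rho s1 a0 by linarith
    then show ?thesis using s1 by simp
  qed
  have e4: "sm * (2 * int v - 74 * a - 49 * sm - 31) = 2 * sm * int v - 74 * a * sm - 49 * sm * sm - 31 * sm"
    by (simp add: algebra_simps)
  have e3: "(3 * a + 4 * sm) * (3 * a + 4 * sm - 1) - 3 * a * (3 * a - 1) - 12 * sm = 24 * a * sm + 16 * sm * sm - 16 * sm"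
    by (simp add: algebra_simps)
  have e1: "a * (2 * int v - 1 - a) = 2 * a * int v - a - a * a" by (simp add: algebra_simps)
  have e0: "2 * int \<rho> * int v - int \<rho>^2 - int \<rho> = 2 * a * int v + 2 * sm * int v - a * a - 2 * a * sm - sm * sm - a - sm"
    unfolding rho by (simp add: algebra_simps power2_eq_square)
  show ?thesis using cN h1 h2 h3 h4 e4 e3 e1 e0 by linarith
qed

end


theorem theorem3p22:
  fixes X :: "'a set" and \<B> :: "'a set set" and v \<rho> :: nat
  assumes "\<rho> \<ge> 1"
    and "2 * real v \<ge> 27 * real \<rho>^2 - 3 * real \<rho> + 60"
    and "packing v 4 X \<B>"
    and "max_ppc_size \<B> \<rho>"
  shows "real (card \<B>) \<le> real \<rho> * real v / 3 - real \<rho> * (real \<rho> + 1) / 6"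
proof -
  obtain P where P: "ppc \<B> P" "finite P" "card P = \<rho>"
    using assms(4) unfolding max_ppc_size_def by blast
  have nm: "\<not> (\<exists>Q. ppc \<B> Q \<and> finite Q \<and> card Q = \<rho> + 1)"
    using assms(4) unfolding max_ppc_size_def by blast
  interpret M: main X \<B> v P \<rho>
    by unfold_locales (use assms(3) P nm in auto)
  have "6 * int (card \<B>) \<le> 2 * int \<rho> * int v - int \<rho>^2 - int \<rho>"
    using M.final assms(1,2) by blast
  then have "real_of_int (6 * int (card \<B>)) \<le> real_of_int (2 * int \<rho> * int v - int \<rho>^2 - int \<rho>)"
    by (simp only: of_int_le_iff)
  then have "6 * real (card \<B>) \<le> 2 * real \<rho> * real v - real \<rho>^2 - real \<rho>" by simp
  then show ?thesis by (simp add: field_simps power2_eq_square)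
qed

end
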